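(* Let $v,w\in\mathfrak{S}_n$ with $v$ boolean, and fix a reduced word $s$ for $v$. Let $\mathcal{W}(v,w)$ be the set of all subwords of $s$ of the form $i(i+1)\cdots(i+j)$ or $(i+j)\cdots(i+1)i$ (with $j\ge0$) such that: in the first case, the permutation $[i(i+1)\cdots(i+j)]\not\le w$ while $[i(i+1)\cdots(i+j-1)]\le w$ and $[(i+1)(i+2)\cdots(i+j)]\le w$; in the second case, $[(i+j)\cdots(i+1)i]\not\le w$ while $[(i+j-1)\cdots(i+1)i]\le w$ and $[(i+j)\cdots(i+2)(i+1)]\le w$ (the empty word denotes the identity, which is $\le w$). Let $\mathcal{W}(v,w)^{\uparrow}$ be the set of maximal subwords of $s$ that contain no element of $\mathcal{W}(v,w)$ as a subword. Then (identifying subwords of $s$ with the permutations they represent) $\mathcal{W}(v,w)^{\uparrow}$ is exactly the set of maximal elements of $B(v)\cap B(w)$.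
   Context: $\sigma_i=(i,i+1)$; $[a_1\cdots a_k]$ denotes the permutation $\sigma_{a_1}\cdots\sigma_{a_k}$; $\le$ is the Bruhat order on $\mathfrak{S}_n$ and $B(w)=\{u:u\le w\}$. A permutation is boolean if its reduced words contain no repeated letters; then every subword of a reduced word for $v$ is itself a reduced word. *)

theory Defs
  imports "HOL-Combinatorics.Combinatorics" "HOL-Library.Sublist"
begin

text \<open>Permutations of S_n are bijections of {1..n} (identity outside).
  Simple transposition sigma_i = (i, i+1); a word [a_1 ... a_k] denotes
  sigma_{a_1} o ... o sigma_{a_k}.\<close>

definition sigma :: "nat \<Rightarrow> nat \<Rightarrow> nat" where
  "sigma i = Transposition.transpose i (Suc i)"

definition word_perm :: "nat list \<Rightarrow> nat \<Rightarrow> nat" where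
  "word_perm ws = foldr (\<lambda>a f. sigma a \<circ> f) ws id"

definition valid_word :: "nat \<Rightarrow> nat list \<Rightarrow> bool" where
  "valid_word n ws \<longleftrightarrow> set ws \<subseteq> {1..<n}"

definition reduced_word :: "nat \<Rightarrow> nat list \<Rightarrow> (nat \<Rightarrow> nat) \<Rightarrow> bool" where
  "reduced_word n ws v \<longleftrightarrow> valid_word n ws \<and> word_perm ws = v \<and>
     (\<forall>ws'. valid_word n ws' \<and> word_perm ws' = v \<longrightarrow> length ws \<le> length ws')"

definition boolean_perm :: "nat \<Rightarrow> (nat \<Rightarrow> nat) \<Rightarrow> bool" where
  "boolean_perm n v \<longleftrightarrow> (\<forall>ws. reduced_word n ws v \<longrightarrow> distinct ws)"

definition inv_count :: "nat \<Rightarrow> (nat \<Rightarrow> nat) \<Rightarrow> nat" where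
  "inv_count n w = card {(i, j). i \<in> {1..n} \<and> j \<in> {1..n} \<and> i < j \<and> w i > w j}"

definition bruhat_step :: "nat \<Rightarrow> ((nat \<Rightarrow> nat) \<times> (nat \<Rightarrow> nat)) set" where
  "bruhat_step n = {(x, x \<circ> Transposition.transpose a b) | x a b.
      a \<in> {1..n} \<and> b \<in> {1..n} \<and> a \<noteq> b \<and>
      inv_count n x < inv_count n (x \<circ> Transposition.transpose a b)}"

definition bruhat_le :: "nat \<Rightarrow> (nat \<Rightarrow> nat) \<Rightarrow> (nat \<Rightarrow> nat) \<Rightarrow> bool" where
  "bruhat_le n u w \<longleftrightarrow> u permutes {1..n} \<and> (u, w) \<in> (bruhat_step n)\<^sup>*"

definition bruhat_interval :: "nat \<Rightarrow> (nat \<Rightarrow> nat) \<Rightarrow> (nat \<Rightarrow> nat) set" where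
  "bruhat_interval n w = {u. bruhat_le n u w}"

definition maximal_elems :: "nat \<Rightarrow> (nat \<Rightarrow> nat) set \<Rightarrow> (nat \<Rightarrow> nat) set" where
  "maximal_elems n S = {u \<in> S. \<forall>u' \<in> S. bruhat_le n u u' \<longrightarrow> u' = u}"

definition W_set :: "nat \<Rightarrow> nat list \<Rightarrow> (nat \<Rightarrow> nat) \<Rightarrow> nat list set" where
  "W_set n s w = {u. subseq u s \<and> (\<exists>i j.
     (u = [i..<i+j+1] \<and> \<not> bruhat_le n (word_perm [i..<i+j+1]) w \<and>
        bruhat_le n (word_perm [i..<i+j]) w \<and> bruhat_le n (word_perm [i+1..<i+j+1]) w)
   \<or> (u = rev [i..<i+j+1] \<and> \<not> bruhat_le n (word_perm (rev [i..<i+j+1])) w \<and>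
        bruhat_le n (word_perm (rev [i..<i+j])) w \<and> bruhat_le n (word_perm (rev [i+1..<i+j+1])) w))}"

definition W_up :: "nat \<Rightarrow> nat list \<Rightarrow> (nat \<Rightarrow> nat) \<Rightarrow> nat list set" where
  "W_up n s w = (let A = {u. subseq u s \<and> (\<forall>x \<in> W_set n s w. \<not> subseq x u)} in
     {u \<in> A. \<forall>u' \<in> A. subseq u u' \<longrightarrow> u' = u})"

end

theory Submission
  imports Defs
begin

lemma sigma_apply: "sigma c v = (if v = c then Suc c else if v = Suc c then c else v)"
  by (simp add: sigma_def transpose_def)

lemma word_perm_Nil [simp]: "word_perm [] = id"
  by (simp add: word_perm_def)

lemma word_perm_Cons [simp]: "word_perm (c # y) = sigma c \<circ> word_perm y"
  by (simp add: word_perm_def)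

lemma bij_sigma: "bij (sigma c)"
  by (simp add: sigma_def)

lemma bij_word_perm: "bij (word_perm x)"
proof (induction x)
  case Nil
  then show ?case by (simp only: word_perm_Nil bij_id)
next
  case (Cons c y)
  then show ?case by (simp only: word_perm_Cons) (rule bij_comp, assumption, rule bij_sigma)
qed

lemma inj_word_perm: "inj (word_perm x)"
  using bij_word_perm bij_is_inj by blast

lemma word_perm_permutes:
  assumes "set x \<subseteq> {1..<n}"
  shows "word_perm x permutes {1..n}"
  using assms
proof (induction x)
  case Nil
  then show ?case by (simp only: word_perm_Nil permutes_id)
next
  case (Cons c y)
  have "sigma c permutes {1..n}"
    unfolding sigma_def using Cons.prems by (intro permutes_swap_id) auto
  moreover have "word_perm y permutes {1..n}" using Cons by simp
  ultimately show ?case by (simp only: word_perm_Cons) (rule permutes_compose)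
qed

lemma word_perm_le_iff:
  assumes "c \<notin> set y"
  shows "word_perm y i \<le> c \<longleftrightarrow> i \<le> c"
  using assms
proof (induction y arbitrary: i)
  case Nil
  then show ?case by simp
next
  case (Cons a y)
  then have "a \<noteq> c" "c \<notin> set y" by auto
  have "sigma a v \<le> c \<longleftrightarrow> v \<le> c" for v
    using \<open>a \<noteq> c\<close> unfolding sigma_apply by auto
  then show ?case using Cons.IH[OF \<open>c \<notin> set y\<close>] by simp
qed

definition invset :: "nat \<Rightarrow> (nat \<Rightarrow> nat) \<Rightarrow> (nat \<times> nat) set" where
  "invset n z = {(i, j). i \<in> {1..n} \<and> j \<in> {1..n} \<and> i < j \<and> z i > z j}"

lemma inv_count_invset: "inv_count n z = card (invset n z)"
  by (simp add: inv_count_def invset_def)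

lemma finite_invset: "finite (invset n z)"
proof -
  have "invset n z \<subseteq> {1..n} \<times> {1..n}" by (auto simp: invset_def)
  then show ?thesis by (rule finite_subset) auto
qed

lemma inv_swap_less:
  assumes ab: "a < b" "a \<in> {1..n}" "b \<in> {1..n}" and zab: "z a < z b"
  shows "inv_count n z < inv_count n (z \<circ> Transposition.transpose a b)"
proof -
  define t where "t = Transposition.transpose a b"
  define f where "f = (\<lambda>p::nat\<times>nat. if (a < fst p \<and> fst p < b) \<or> (a < snd p \<and> snd p < b) then p
      else (t (fst p), t (snd p)))"
  have tt: "t (t x) = x" for x by (simp add: t_def)
  have tint: "(a < t x \<and> t x < b) \<longleftrightarrow> (a < x \<and> x < b)" for x
    using ab by (auto simp: t_def transpose_def)
  have ff: "f (f p) = p" for p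
  proof (cases p)
    case (Pair i j)
    show ?thesis
    proof (cases "(a < i \<and> i < b) \<or> (a < j \<and> j < b)")
      case True
      then show ?thesis by (simp add: f_def Pair)
    next
      case False
      then have "\<not> ((a < t i \<and> t i < b) \<or> (a < t j \<and> t j < b))" using tint by blast
      then show ?thesis using False by (auto simp: f_def Pair tt)
    qed
  qed
  have inj: "inj_on f (invset n z)"
    by (metis ff inj_onI)
  have sub: "f ` invset n z \<subseteq> invset n (z \<circ> t) - {(a, b)}"
  proof
    fix q assume "q \<in> f ` invset n z"
    then obtain i j where ij: "(i, j) \<in> invset n z" and q: "q = f (i, j)" by auto
    from ij have i: "i \<in> {1..n}" and j: "j \<in> {1..n}" and lt: "i < j" and zz: "z i > z j"
      by (auto simp: invset_def)
    show "q \<in> invset n (z \<circ> t) - {(a, b)}"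
    proof (cases "(a < i \<and> i < b) \<or> (a < j \<and> j < b)")
      case True
      then have "q = (i, j)" by (simp add: q f_def)
      moreover have "z (t i) > z (t j)"
        using True lt zz zab ab unfolding t_def transpose_def by auto
      ultimately show ?thesis using i j lt True by (auto simp: invset_def)
    next
      case False
      have q2: "q = (t i, t j)" using False unfolding q f_def by (metis fst_conv snd_conv)
      have "(i, j) \<noteq> (a, b)" using zz zab by auto
      then have "t i < t j" using False lt ab unfolding t_def transpose_def by auto
      moreover have "t i \<in> {1..n}" "t j \<in> {1..n}" using i j ab by (auto simp: t_def transpose_def)
      moreover have "(t i, t j) \<noteq> (a, b)" using lt ab by (auto simp: t_def transpose_def split: if_splits)
      ultimately show ?thesis using zz tt by (auto simp: invset_def q2)
    qed
  qed
  have ab_in: "(a, b) \<in> invset n (z \<circ> t)"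
    using ab zab by (auto simp: invset_def t_def)
  have "card (invset n z) = card (f ` invset n z)"
    using inj by (simp add: card_image)
  also have "\<dots> \<le> card (invset n (z \<circ> t) - {(a, b)})"
    using sub by (intro card_mono) (auto intro: finite_invset)
  also have "\<dots> < card (invset n (z \<circ> t))"
    using ab_in finite_invset by (metis card_Diff1_less)
  finally show ?thesis by (simp add: inv_count_invset t_def)
qed

lemma inv_step_dir:
  assumes ab: "a < b" "a \<in> {1..n}" "b \<in> {1..n}"
    and lt: "inv_count n z < inv_count n (z \<circ> Transposition.transpose a b)"
  shows "z a < z b"
proof (rule ccontr)
  assume "\<not> z a < z b"
  then consider "z a = z b" | "z b < z a" by linarith
  then show False
  proof cases
    case 1
    then have "z \<circ> Transposition.transpose a b = z"
      by (auto simp: transpose_def)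
    then show False using lt by simp
  next
    case 2
    let ?z = "z \<circ> Transposition.transpose a b"
    have "?z a < ?z b" using 2 ab by simp
    from inv_swap_less[OF ab this] have "inv_count n ?z < inv_count n (?z \<circ> Transposition.transpose a b)" .
    then show False using lt by (simp add: comp_assoc)
  qed
qed

section \<open>Rank function and the tableau criterion\<close>

definition rk :: "(nat \<Rightarrow> nat) \<Rightarrow> nat \<Rightarrow> nat \<Rightarrow> nat" where
  "rk p k l = (\<Sum>i=1..k. if l \<le> p i then 1 else 0)"

lemma rk_0 [simp]: "rk p 0 l = 0"
  by (simp add: rk_def)

lemma rk_Suc: "rk p (Suc k) l = rk p k l + (if l \<le> p (Suc k) then 1 else 0)"
  by (simp add: rk_def)

lemma rk_split:
  assumes "a \<le> k"
  shows "rk p k l = rk p a l + (\<Sum>i=Suc a..k. if l \<le> p i then 1 else 0)"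
  using assms
proof (induction k)
  case 0
  then show ?case by simp
next
  case (Suc k)
  show ?case
  proof (cases "a = Suc k")
    case True
    then show ?thesis by simp
  next
    case False
    then have "a \<le> k" using Suc.prems by simp
    then show ?thesis using Suc.IH by (simp add: rk_Suc)
  qed
qed

lemma rk_agree:
  assumes "\<And>i. i \<le> k \<Longrightarrow> p i = q i"
  shows "rk p k l = rk q k l"
  unfolding rk_def using assms by (intro sum.cong) auto

lemma rk_swap:
  assumes ab: "a < b" "1 \<le> a" and xab: "x a < x b"
  shows "rk (x \<circ> Transposition.transpose a b) k l
       = rk x k l + (if a \<le> k \<and> k < b \<and> x a < l \<and> l \<le> x b then 1 else 0)"
proof -
  define t where "t = Transposition.transpose a b"
  define g where "g = (\<lambda>i. if l \<le> x i then 1 else (0::nat))"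
  have rkx: "rk x k l = sum g {1..k}" by (simp add: rk_def g_def)
  have rkt: "rk (x \<circ> t) k l = sum (\<lambda>i. g (t i)) {1..k}" by (simp add: rk_def g_def)
  consider "k < a" | "b \<le> k" | "a \<le> k \<and> k < b" by linarith
  then show ?thesis
  proof cases
    case 1
    have "sum (\<lambda>i. g (t i)) {1..k} = sum g {1..k}"
      using 1 ab by (intro sum.cong) (auto simp: t_def)
    then show ?thesis using 1 rkx rkt by (simp add: t_def)
  next
    case 2
    have "t permutes {1..k}" unfolding t_def using 2 ab by (intro permutes_swap_id) auto
    then have "bij_betw t {1..k} {1..k}" by (rule permutes_imp_bij)
    then have "sum (\<lambda>i. g (t i)) {1..k} = sum g {1..k}" by (rule sum.reindex_bij_betw)
    then show ?thesis using 2 ab rkx rkt by (simp add: t_def)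
  next
    case 3
    have ain: "a \<in> {1..k}" using 3 ab by auto
    have rest: "sum (\<lambda>i. g (t i)) ({1..k} - {a}) = sum g ({1..k} - {a})"
      using 3 ab by (intro sum.cong) (auto simp: t_def)
    have e1: "sum (\<lambda>i. g (t i)) {1..k} = g b + sum (\<lambda>i. g (t i)) ({1..k} - {a})"
      using ain by (subst sum.remove[of _ a]) (auto simp: t_def)
    have e2: "sum g {1..k} = g a + sum g ({1..k} - {a})"
      using ain by (subst sum.remove[of _ a]) auto
    have "g b = g a + (if x a < l \<and> l \<le> x b then 1 else 0)"
      using xab by (auto simp: g_def)
    then show ?thesis using 3 rkx rkt e1 e2 rest by (simp add: t_def)
  qed
qed

lemma rk_swap_mono:
  assumes "a < b" "1 \<le> a" "x a < x b"
  shows "rk x k l \<le> rk (x \<circ> Transposition.transpose a b) k l"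
  using rk_swap[OF assms] by simp

lemma bruhat_step_rk:
  assumes "(y, z) \<in> bruhat_step n"
  shows "rk y k l \<le> rk z k l"
proof -
  obtain a b where z: "z = y \<circ> Transposition.transpose a b" and ab: "a \<in> {1..n}" "b \<in> {1..n}" "a \<noteq> b"
    and lt: "inv_count n y < inv_count n (y \<circ> Transposition.transpose a b)"
    using assms by (auto simp: bruhat_step_def)
  show ?thesis
  proof (cases "a < b")
    case True
    have "y a < y b" using inv_step_dir[OF True ab(1,2) lt] .
    then show ?thesis using rk_swap_mono[OF True _ \<open>y a < y b\<close>] ab z by auto
  next
    case False
    then have ba: "b < a" using ab by simp
    have tc: "Transposition.transpose a b = Transposition.transpose b a" by (rule transpose_commute)
    have "y b < y a" using inv_step_dir[OF ba ab(2,1)] lt tc by simp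
    then show ?thesis using rk_swap_mono[OF ba _ \<open>y b < y a\<close>] ab z tc by auto
  qed
qed

lemma bruhat_imp_rk:
  assumes "bruhat_le n u w"
  shows "rk u k l \<le> rk w k l"
proof -
  from assms have "(u, w) \<in> (bruhat_step n)\<^sup>*" by (simp add: bruhat_le_def)
  then show ?thesis
  proof (induction rule: rtrancl_induct)
    case base
    then show ?case by simp
  next
    case (step y z)
    then show ?case using bruhat_step_rk[OF step(2), of k l] by linarith
  qed
qed

definition Dm :: "nat \<Rightarrow> (nat \<Rightarrow> nat) \<Rightarrow> (nat \<Rightarrow> nat) \<Rightarrow> nat" where
  "Dm n w u = (\<Sum>p\<in>{1..n} \<times> {1..n}. rk w (fst p) (snd p) - rk u (fst p) (snd p))"

lemma rk_imp_bruhat_aux: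
  assumes w: "w permutes {1..n}"
  shows "u permutes {1..n} \<Longrightarrow> (\<forall>k l. rk u k l \<le> rk w k l) \<Longrightarrow> (u, w) \<in> (bruhat_step n)\<^sup>*"
proof (induction "Dm n w u" arbitrary: u rule: less_induct)
  case less
  note u = less.prems(1) and hyp = less.prems(2)
  show ?case
  proof (cases "u = w")
    case True
    then show ?thesis by simp
  next
    case False
    then obtain i0 where "u i0 \<noteq> w i0" by auto
    define a where "a = (LEAST i. u i \<noteq> w i)"
    have ua: "u a \<noteq> w a" unfolding a_def by (rule LeastI[of _ i0]) fact
    have below: "u i = w i" if "i < a" for i
      using that not_less_Least unfolding a_def by blast
    have a1: "a \<in> {1..n}"
    proof (rule ccontr)
      assume "a \<notin> {1..n}"
      then have "u a = a" "w a = a" using u w by (auto intro: permutes_not_in)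
      then show False using ua by simp
    qed
    then have a_pos: "1 \<le> a" by simp
    have agree: "rk u (a - 1) l = rk w (a - 1) l" for l
      by (rule rk_agree) (use below a_pos in auto)
    have rka: "rk p a l = rk p (a - 1) l + (if l \<le> p a then 1 else 0)" for p l
      using rk_Suc[of p "a - 1" l] a_pos by simp
    have uwa: "u a < w a"
    proof (rule ccontr)
      assume "\<not> u a < w a"
      then have "w a < u a" using ua by simp
      then have "rk u a (u a) > rk w a (u a)"
        using rka[of u "u a"] rka[of w "u a"] agree[of "u a"] by simp
      then show False using hyp by (meson not_le)
    qed
    obtain j0 where j0: "u j0 = w a"
      using permutes_inverses(1)[OF u] by blast
    have j0a: "a < j0"
    proof -
      have "j0 \<noteq> a" using j0 ua by auto
      moreover have "\<not> j0 < a"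
      proof
        assume "j0 < a"
        then have "w j0 = w a" using below j0 by simp
        then have "j0 = a" using w by (metis permutes_inj injD)
        then show False using \<open>j0 < a\<close> by simp
      qed
      ultimately show ?thesis by simp
    qed
    have wa_in: "w a \<in> {1..n}" using permutes_in_image[OF w] a1 by blast
    have j0n: "j0 \<in> {1..n}"
      using u j0 wa_in by (metis permutes_in_image)
    define P where "P = (\<lambda>j. a < j \<and> u a < u j \<and> u j \<le> w a)"
    have Pj0: "P j0" using j0a j0 uwa by (simp add: P_def)
    define b where "b = (LEAST j. P j)"
    have Pb: "P b" unfolding b_def by (rule LeastI[of _ j0]) (rule Pj0)
    have bj0: "b \<le> j0" unfolding b_def by (rule Least_le) (rule Pj0)
    have notP: "\<not> P j" if "j < b" for j
      using that not_less_Least unfolding b_def by blast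
    have ab: "a < b" and uab: "u a < u b" and ubw: "u b \<le> w a" using Pb by (auto simp: P_def)
    have b1: "b \<in> {1..n}" using bj0 j0n ab a_pos by auto
    define t where "t = Transposition.transpose a b"
    define u' where "u' = u \<circ> t"
    have u'perm: "u' permutes {1..n}"
      unfolding u'_def t_def by (rule permutes_compose[OF permutes_swap_id[OF a1 b1] u])
    have invlt: "inv_count n u < inv_count n u'"
      unfolding u'_def t_def using inv_swap_less[OF ab a1 b1 uab] .
    have stepu: "(u, u') \<in> bruhat_step n"
    proof -
      have "a \<noteq> b" using ab by simp
      then show ?thesis unfolding bruhat_step_def u'_def t_def
        using a1 b1 invlt[unfolded u'_def t_def] by blast
    qed
    have rku': "rk u' k l = rk u k l + (if a \<le> k \<and> k < b \<and> u a < l \<and> l \<le> u b then 1 else 0)" for k l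
      unfolding u'_def t_def by (rule rk_swap[OF ab a_pos uab])
    have key: "rk u k l < rk w k l" if kl: "a \<le> k" "k < b" "u a < l" "l \<le> u b" for k l
    proof -
      define T where "T = (\<lambda>(p::nat \<Rightarrow> nat) (m::nat). (\<Sum>i=Suc a..k. if m \<le> p i then 1 else (0::nat)))"
      have sp: "rk p k m = rk p (a - 1) m + (if m \<le> p a then 1 else 0) + T p m" for p m
        using rk_split[OF kl(1), of p m] rka[of p m] by (simp add: T_def)
      have T1: "T u l = T u (Suc (w a))"
        unfolding T_def
      proof (intro sum.cong refl)
        fix i assume "i \<in> {Suc a..k}"
        then have "a < i" "i < b" using kl by auto
        then have "\<not> (u a < u i \<and> u i \<le> w a)" using notP[of i] by (simp add: P_def)
        then show "(if l \<le> u i then 1 else 0) = (if Suc (w a) \<le> u i then 1 else (0::nat))"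
          using kl ubw by auto
      qed
      have T2: "T u (Suc (w a)) \<le> T w (Suc (w a))"
        using hyp[rule_format, of k "Suc (w a)"] sp[of u "Suc (w a)"] sp[of w "Suc (w a)"]
          agree[of "Suc (w a)"] uwa by simp
      have T3: "T w (Suc (w a)) \<le> T w l"
        unfolding T_def using kl ubw by (intro sum_mono) auto
      show ?thesis
        using sp[of u l] sp[of w l] agree[of l] T1 T2 T3 kl ubw by simp
    qed
    have u'w: "\<forall>k l. rk u' k l \<le> rk w k l"
    proof (intro allI)
      fix k l
      show "rk u' k l \<le> rk w k l"
      proof (cases "a \<le> k \<and> k < b \<and> u a < l \<and> l \<le> u b")
        case True
        then show ?thesis using key[of k l] rku'[of k l] by simp
      next
        case False
        then have "rk u' k l = rk u k l" using rku'[of k l] by (metis add.right_neutral)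
        then show ?thesis using hyp by simp
      qed
    qed
    have ubn: "u b \<in> {1..n}" using permutes_in_image[OF u] b1 by blast
    have "Dm n w u' < Dm n w u"
      unfolding Dm_def
    proof (rule sum_strict_mono_ex1)
      show "finite ({1..n} \<times> {1..n})" by simp
      show "\<forall>p\<in>{1..n} \<times> {1..n}. rk w (fst p) (snd p) - rk u' (fst p) (snd p)
          \<le> rk w (fst p) (snd p) - rk u (fst p) (snd p)"
      proof
        fix p :: "nat \<times> nat"
        show "rk w (fst p) (snd p) - rk u' (fst p) (snd p) \<le> rk w (fst p) (snd p) - rk u (fst p) (snd p)"
          using rku'[of "fst p" "snd p"] by (intro diff_le_mono2) simp
      qed
      have "rk w a (Suc (u a)) - rk u' a (Suc (u a)) < rk w a (Suc (u a)) - rk u a (Suc (u a))"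
      proof -
        have e: "rk u' a (Suc (u a)) = rk u a (Suc (u a)) + 1" using rku'[of a "Suc (u a)"] ab uab by simp
        have "rk u' a (Suc (u a)) \<le> rk w a (Suc (u a))" using u'w by blast
        then show ?thesis using e by arith
      qed
      moreover have "(a, Suc (u a)) \<in> {1..n} \<times> {1..n}" using a1 uab ubn by auto
      ultimately show "\<exists>p\<in>{1..n} \<times> {1..n}. rk w (fst p) (snd p) - rk u' (fst p) (snd p)
          < rk w (fst p) (snd p) - rk u (fst p) (snd p)" by force
    qed
    then have "(u', w) \<in> (bruhat_step n)\<^sup>*" using less.hyps u'perm u'w by blast
    then show ?thesis using stepu by (meson converse_rtrancl_into_rtrancl)
  qed
qed

theorem bruhat_iff_rk:
  assumes "u permutes {1..n}" "w permutes {1..n}"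
  shows "bruhat_le n u w \<longleftrightarrow> (\<forall>k l. rk u k l \<le> rk w k l)"
  using assms bruhat_imp_rk rk_imp_bruhat_aux unfolding bruhat_le_def by blast

lemma rk_id: "rk id k m = k - (m - 1)"
  by (induction k) (auto simp: rk_Suc)

lemma rk_id': "rk (\<lambda>a. a) k m = k - (m - 1)"
  using rk_id by (simp add: id_def)

lemma rk_card: "rk p k l = card {i\<in>{1..k}. l \<le> p i}"
  unfolding rk_def by (simp add: sum.If_cases Int_def conj_commute)

lemma rk_compl: "rk p k l + card {i\<in>{1..k}. p i < l} = k"
proof -
  have "{1..k} = {i\<in>{1..k}. l \<le> p i} \<union> {i\<in>{1..k}. p i < l}" by auto
  moreover have "{i\<in>{1..k}. l \<le> p i} \<inter> {i\<in>{1..k}. p i < l} = {}" by auto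
  ultimately have "card {1..k} = card {i\<in>{1..k}. l \<le> p i} + card {i\<in>{1..k}. p i < l}"
    by (metis (no_types, lifting) card_Un_disjoint finite_Un finite_atLeastAtMost)
  then show ?thesis by (simp add: rk_card)
qed

lemma rk_id_le:
  assumes w: "w permutes {1..n}"
  shows "rk id k l \<le> rk w k l"
proof -
  have pos: "1 \<le> w i" if "1 \<le> i" for i
  proof (cases "i \<in> {1..n}")
    case True
    then show ?thesis using permutes_in_image[OF w] by auto
  next
    case False
    then show ?thesis using permutes_not_in[OF w False] that by simp
  qed
  have "card {i\<in>{1..k}. w i < l} \<le> card {1..<l}"
  proof (rule card_inj_on_le)
    show "inj_on w {i\<in>{1..k}. w i < l}" using permutes_inj[OF w] by (auto intro: inj_on_subset)
    show "w ` {i\<in>{1..k}. w i < l} \<subseteq> {1..<l}" using pos by auto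
  qed auto
  then have "card {i\<in>{1..k}. w i < l} \<le> l - 1" by simp
  moreover have "rk w k l = k - card {i\<in>{1..k}. w i < l}"
    using rk_compl[of w k l] by (metis add_diff_cancel_right')
  ultimately show ?thesis unfolding rk_id by (simp add: diff_le_mono2)
qed

section \<open>Runs and the rank of boolean words\<close>

definition run :: "nat \<Rightarrow> nat \<Rightarrow> nat list" where
  "run k l = (if k < l then rev [k..<l] else [l - 1..<Suc k])"

lemma run_Cons: "\<exists>t. run k l = (l - 1) # t"
proof (cases "k < l")
  case True
  then have "[k..<l] = [k..<l - 1] @ [l - 1]"
    using upt_Suc_append[of k "l - 1"] by simp
  then show ?thesis using True by (simp add: run_def)
next
  case False
  then have "l - 1 < Suc k" by simp
  then have "[l - 1..<Suc k] = (l - 1) # [Suc (l - 1)..<Suc k]" by (rule upt_conv_Cons)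
  then show ?thesis using False by (simp add: run_def)
qed

lemma run_tl:
  assumes "1 \<le> l"
  shows "run k l = (l - 1) # (if k < l - 1 then run k (l - 1) else if k = l - 1 then [] else run k (l + 1))"
proof -
  consider "k < l - 1" | "k = l - 1" | "l \<le> k" using assms by linarith
  then show ?thesis
  proof cases
    case 1
    then have "[k..<l] = [k..<l - 1] @ [l - 1]" using assms
      using upt_Suc_append[of k "l - 1"] by simp
    then show ?thesis using 1 assms by (simp add: run_def)
  next
    case 2
    obtain m where "l = Suc m" using assms by (cases l) auto
    then show ?thesis using 2 by (simp add: run_def)
  next
    case 3
    have "[l - 1..<Suc k] = (l - 1) # [l..<Suc k]" using 3 assms by (simp add: upt_conv_Cons)
    moreover have "run k (l + 1) = [l..<Suc k]"
    proof (cases "k = l")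
      case True
      then show ?thesis by (simp add: run_def)
    next
      case False
      then show ?thesis using 3 by (simp add: run_def)
    qed
    ultimately show ?thesis using 3 assms by (simp add: run_def)
  qed
qed

lemma run_single: "run c (Suc c) = [c]"
  by (simp add: run_def)

lemma run_mem1: "k \<le> c \<Longrightarrow> c \<in> set (run k (Suc (Suc c)))"
  by (simp add: run_def)

lemma run_mem2: "c \<le> k \<Longrightarrow> 1 \<le> c \<Longrightarrow> c \<in> set (run k c)"
  by (auto simp: run_def)

lemma subseq_set: "subseq xs ys \<Longrightarrow> set xs \<subseteq> set ys"
  by (induct rule: list_emb.induct) auto

lemma sigma_ge_other: "Suc c \<noteq> l \<Longrightarrow> (l \<le> sigma c v) = (l \<le> v)"
  by (auto simp: sigma_apply)

lemma rk_sigma_other: "Suc c \<noteq> l \<Longrightarrow> rk (sigma c \<circ> p) k l = rk p k l"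
  unfolding rk_def using sigma_ge_other by simp

lemma rk_sigma_eq:
  "rk (sigma c \<circ> p) k (Suc c) + rk p k (Suc c) = rk p k (Suc (Suc c)) + rk p k c"
proof -
  have pt: "(if Suc c \<le> sigma c v then 1 else 0) + (if Suc c \<le> v then 1 else 0)
      = (if Suc (Suc c) \<le> v then 1 else 0) + (if c \<le> v then 1 else (0::nat))" for v
    by (auto simp: sigma_apply)
  show ?thesis unfolding rk_def comp_def
    by (simp only: sum.distrib[symmetric] pt)
qed

lemma rk_word:
  assumes "distinct y" "0 \<notin> set y"
  shows "rk (word_perm y) k l = rk id k l + (if subseq (run k l) y then 1 else 0)"
  using assms
proof (induction y arbitrary: k l)
  case Nil
  obtain t where "run k l = (l - 1) # t" using run_Cons by blast
  then show ?case by simp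
next
  case (Cons c y)
  then have cy: "c \<notin> set y" and dy: "distinct y" and zy: "0 \<notin> set y" and c1: "1 \<le> c" by auto
  note IH = Cons.IH[OF dy zy]
  let ?p = "word_perm y"
  show ?case
  proof (cases "Suc c = l")
    case False
    obtain t where rt: "run k l = (l - 1) # t" using run_Cons by blast
    have "l - 1 \<noteq> c" using False c1 by auto
    then have "subseq (run k l) (c # y) = subseq (run k l) y" using rt by simp
    moreover have "rk (word_perm (c # y)) k l = rk ?p k l"
      using rk_sigma_other[OF False, of ?p k] by (simp only: word_perm_Cons)
    ultimately show ?thesis using IH[of k l] by (simp del: word_perm_Cons)
  next
    case True
    then have l: "l = Suc c" by simp
    have nr: "\<not> subseq (run k (Suc c)) y"
      using run_tl[of "Suc c" k] cy subseq_set by fastforce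
    have eq: "rk (word_perm (c # y)) k (Suc c) + rk ?p k (Suc c) = rk ?p k (Suc (Suc c)) + rk ?p k c"
      using rk_sigma_eq[of c ?p k] by (simp only: word_perm_Cons)
    have h1: "rk ?p k (Suc c) = rk id k (Suc c)" using IH[of k "Suc c"] nr by (simp add: id_def)
    have h2: "rk ?p k (Suc (Suc c)) = rk id k (Suc (Suc c)) + (if subseq (run k (Suc (Suc c))) y then 1 else 0)"
      by (rule IH)
    have h3: "rk ?p k c = rk id k c + (if subseq (run k c) y then 1 else 0)"
      by (rule IH)
    have tl: "subseq (run k (Suc c)) (c # y) =
        subseq (if k < c then run k c else if k = c then [] else run k (Suc (Suc c))) y"
      using run_tl[of "Suc c" k] by simp
    consider "k < c" | "k = c" | "c < k" by linarith
    then show ?thesis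
    proof cases
      case 1
      have "\<not> subseq (run k (Suc (Suc c))) y" using run_mem1[of k c] 1 cy subseq_set by fastforce
      then show ?thesis using eq h1 h2 h3 tl 1 l by (simp add: rk_id rk_id' del: word_perm_Cons)
    next
      case 2
      have "\<not> subseq (run k (Suc (Suc c))) y" using run_mem1[of k c] 2 cy subseq_set by fastforce
      moreover have "\<not> subseq (run k c) y" using run_mem2[of c k] 2 c1 cy subseq_set by fastforce
      ultimately show ?thesis using eq h1 h2 h3 tl 2 l c1 by (simp add: rk_id rk_id' del: word_perm_Cons)
    next
      case 3
      have "\<not> subseq (run k c) y" using run_mem2[of c k] 3 c1 cy subseq_set by fastforce
      then show ?thesis using eq h1 h2 h3 tl 3 l c1 by (simp add: rk_id rk_id' del: word_perm_Cons)
    qed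
  qed
qed


section \<open>Strong exchange and the lower interval of v\<close>

lemma sigma_order_flip:
  assumes "p < q" "sigma c p > sigma c q"
  shows "p = c \<and> q = Suc c"
  using assms by (auto simp: sigma_apply split: if_splits)

lemma strong_exchange:
  assumes ab: "a < b" and gt: "word_perm x a > word_perm x b"
  shows "\<exists>x'. subseq x' x \<and> word_perm x \<circ> Transposition.transpose a b = word_perm x'"
  using gt
proof (induction x)
  case Nil
  then show ?case using ab by simp
next
  case (Cons c y)
  let ?p = "word_perm y"
  let ?t = "Transposition.transpose a b"
  show ?case
  proof (cases "?p a > ?p b")
    case True
    then obtain y' where y': "subseq y' y" "?p \<circ> ?t = word_perm y'" using Cons.IH by blast
    have "word_perm (c # y) \<circ> ?t = word_perm (c # y')"
      using y'(2) by (simp add: comp_assoc)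
    moreover have "subseq (c # y') (c # y)" using y'(1) by simp
    ultimately show ?thesis by blast
  next
    case False
    have "?p a \<noteq> ?p b" using inj_word_perm[of y] ab by (metis injD less_irrefl)
    then have lt: "?p a < ?p b" using False by simp
    have "sigma c (?p a) > sigma c (?p b)" using Cons.prems by simp
    then have pc: "?p a = c" "?p b = Suc c" using sigma_order_flip[OF lt] by auto
    have "word_perm (c # y) \<circ> ?t = ?p"
    proof
      fix i
      show "(word_perm (c # y) \<circ> ?t) i = ?p i"
      proof (cases "i = a \<or> i = b")
        case True
        then show ?thesis using pc by (auto simp: sigma_apply)
      next
        case False
        then have ne: "?p i \<noteq> c" "?p i \<noteq> Suc c" using pc inj_word_perm[of y] by (metis injD)+
        have "?t i = i" using False by simp
        then show ?thesis using ne by (simp add: sigma_apply)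
      qed
    qed
    moreover have "subseq y (c # y)" by (simp add: list_emb_Cons)
    ultimately show ?thesis by blast
  qed
qed

lemma below_word:
  assumes "(q, z) \<in> (bruhat_step n)\<^sup>*" and "subseq x0 s" and "z = word_perm x0"
  shows "\<exists>x. subseq x s \<and> q = word_perm x"
  using assms(1)
proof (induction rule: converse_rtrancl_induct)
  case base
  then show ?case using assms(2,3) by blast
next
  case (step y z')
  from step.IH obtain x where x: "subseq x s" "z' = word_perm x" by blast
  from step.hyps(1) obtain a0 b0 where z0: "z' = y \<circ> Transposition.transpose a0 b0"
    and ab0: "a0 \<in> {1..n}" "b0 \<in> {1..n}" "a0 \<noteq> b0"
    and lt: "inv_count n y < inv_count n z'"
    by (auto simp: bruhat_step_def)
  obtain a b where ab: "a < b" "a \<in> {1..n}" "b \<in> {1..n}"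
    and tt: "Transposition.transpose a0 b0 = Transposition.transpose a b"
  proof (cases "a0 < b0")
    case True
    then show ?thesis using that ab0 by blast
  next
    case False
    then have "b0 < a0" using ab0 by simp
    then show ?thesis using that ab0 transpose_commute by metis
  qed
  let ?t = "Transposition.transpose a b"
  have z': "z' = y \<circ> ?t" using z0 tt by simp
  have y: "y = z' \<circ> ?t" using z' by (simp add: comp_assoc)
  have "word_perm x a \<noteq> word_perm x b"
    using inj_word_perm[of x] ab by (metis injD less_irrefl)
  moreover have "\<not> word_perm x a < word_perm x b"
  proof
    assume wl: "word_perm x a < word_perm x b"
    from inv_swap_less[OF ab wl] have "inv_count n z' < inv_count n y"
      using x(2) y by simp
    then show False using lt by simp
  qed
  ultimately have "word_perm x a > word_perm x b" by simp
  then obtain x' where "subseq x' x" "word_perm x \<circ> ?t = word_perm x'"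
    using strong_exchange[OF ab(1)] by blast
  then show ?case using x y by (metis subseq_order.trans)
qed

section \<open>Subwords of a word with distinct letters\<close>

lemma filter_subseq_distinct:
  "distinct s \<Longrightarrow> subseq x s \<Longrightarrow> x = filter (\<lambda>c. c \<in> set x) s"
proof (induction s arbitrary: x)
  case Nil
  then show ?case by simp
next
  case (Cons c s)
  show ?case
  proof (cases x)
    case Nil
    then show ?thesis by simp
  next
    case (Cons d x')
    show ?thesis
    proof (cases "d = c")
      case True
      then have "subseq x' s" using Cons Cons.prems by simp
      then have x': "x' = filter (\<lambda>e. e \<in> set x') s" using Cons.IH Cons.prems by simp
      have "c \<notin> set s" using Cons.prems by simp
      then have "filter (\<lambda>e. e \<in> set x) s = filter (\<lambda>e. e \<in> set x') s"
        using Cons True by (auto intro!: filter_cong)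
      then show ?thesis using Cons True x' by simp
    next
      case False
      then have "subseq x s" using Cons Cons.prems by simp
      then have x: "x = filter (\<lambda>e. e \<in> set x) s" using Cons.IH Cons.prems by simp
      have "c \<notin> set x" using \<open>subseq x s\<close> subseq_set Cons.prems by fastforce
      then show ?thesis using x by simp
    qed
  qed
qed

lemma subseq_distinct: "distinct s \<Longrightarrow> subseq x s \<Longrightarrow> distinct x"
  by (metis distinct_filter filter_subseq_distinct)

lemma subseq_of_set:
  assumes "distinct s" "subseq x s" "subseq y s" "set x \<subseteq> set y"
  shows "subseq x y"
proof -
  have x: "x = filter (\<lambda>c. c \<in> set x) s" by (rule filter_subseq_distinct[OF assms(1,2)])
  have y: "y = filter (\<lambda>c. c \<in> set y) s" by (rule filter_subseq_distinct[OF assms(1,3)])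
  have "filter (\<lambda>c. c \<in> set x) y = filter (\<lambda>c. c \<in> set x) s"
    using assms(4) by (subst y) (auto simp: filter_filter intro!: filter_cong)
  then have "x = filter (\<lambda>c. c \<in> set x) y" using x by simp
  then show ?thesis by (metis subseq_filter_left)
qed

lemma subseq_rev: "subseq xs ys \<Longrightarrow> subseq (rev xs) (rev ys)"
proof (induction rule: list_emb.induct)
  case (list_emb_Nil ys)
  then show ?case by simp
next
  case (list_emb_Cons xs ys y)
  then show ?case by (simp add: subseq_rev_drop_many)
next
  case (list_emb_Cons2 x y xs ys)
  then show ?case by (simp add: list_emb_append_mono)
qed

lemma pre_sub: "subseq [a..<b] [a..<Suc b]"
  by (cases "a \<le> b") (auto simp: subseq_rev_drop_many)

lemma suf_sub: "subseq [Suc a..<b] [a..<b]"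
proof (cases "a < b")
  case True
  then have "[a..<b] = a # [Suc a..<b]" by (rule upt_conv_Cons)
  then show ?thesis by (simp add: list_emb_Cons)
next
  case False
  then show ?thesis by simp
qed

lemma ble_trans: "bruhat_le n a b \<Longrightarrow> bruhat_le n b c \<Longrightarrow> bruhat_le n a c"
  unfolding bruhat_le_def by auto

lemma id_le: "w permutes {1..n} \<Longrightarrow> bruhat_le n id w"
  using bruhat_iff_rk[OF permutes_id, of w n] rk_id_le by blast

lemma W_inc:
  "subseq [i..<i+j+1] s \<Longrightarrow> \<not> bruhat_le n (word_perm [i..<i+j+1]) w \<Longrightarrow>
   bruhat_le n (word_perm [i..<i+j]) w \<Longrightarrow> bruhat_le n (word_perm [i+1..<i+j+1]) w \<Longrightarrow>
   [i..<i+j+1] \<in> W_set n s w"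
  unfolding W_set_def by blast

lemma W_dec:
  "subseq (rev [i..<i+j+1]) s \<Longrightarrow> \<not> bruhat_le n (word_perm (rev [i..<i+j+1])) w \<Longrightarrow>
   bruhat_le n (word_perm (rev [i..<i+j])) w \<Longrightarrow> bruhat_le n (word_perm (rev [i+1..<i+j+1])) w \<Longrightarrow>
   rev [i..<i+j+1] \<in> W_set n s w"
  unfolding W_set_def by blast

lemma min_inc:
  assumes w: "w permutes {1..n}"
  shows "subseq [i..<i+j+1] s \<Longrightarrow> \<not> bruhat_le n (word_perm [i..<i+j+1]) w \<Longrightarrow>
    \<exists>u\<in>W_set n s w. subseq u [i..<i+j+1]"
proof (induction j arbitrary: i)
  case 0
  have "[i..<i+0+1] \<in> W_set n s w"
    using 0 id_le[OF w] by (intro W_inc) auto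
  then show ?case by blast
next
  case (Suc j)
  have p1: "subseq [i..<i+j+1] [i..<i+Suc j+1]" using pre_sub[of i "i+j+1"] by simp
  have p2: "subseq [Suc i..<Suc i+j+1] [i..<i+Suc j+1]" using suf_sub[of i "i+Suc j+1"] by simp
  show ?case
  proof (cases "bruhat_le n (word_perm [i..<i+Suc j]) w \<and> bruhat_le n (word_perm [i+1..<i+Suc j+1]) w")
    case True
    then have "[i..<i+Suc j+1] \<in> W_set n s w" using Suc.prems by (intro W_inc) auto
    then show ?thesis by blast
  next
    case False
    then consider "\<not> bruhat_le n (word_perm [i..<i+j+1]) w" | "\<not> bruhat_le n (word_perm [Suc i..<Suc i+j+1]) w"
      by fastforce
    then show ?thesis
    proof cases
      case 1
      have "subseq [i..<i+j+1] s" using p1 Suc.prems(1) by (rule subseq_order.trans)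
      then obtain u where "u \<in> W_set n s w" "subseq u [i..<i+j+1]" using Suc.IH 1 by blast
      then show ?thesis using p1 by (meson subseq_order.trans)
    next
      case 2
      have "subseq [Suc i..<Suc i+j+1] s" using p2 Suc.prems(1) by (rule subseq_order.trans)
      then obtain u where "u \<in> W_set n s w" "subseq u [Suc i..<Suc i+j+1]" using Suc.IH 2 by blast
      then show ?thesis using p2 by (meson subseq_order.trans)
    qed
  qed
qed

lemma min_dec:
  assumes w: "w permutes {1..n}"
  shows "subseq (rev [i..<i+j+1]) s \<Longrightarrow> \<not> bruhat_le n (word_perm (rev [i..<i+j+1])) w \<Longrightarrow>
    \<exists>u\<in>W_set n s w. subseq u (rev [i..<i+j+1])"
proof (induction j arbitrary: i)
  case 0
  have "rev [i..<i+0+1] \<in> W_set n s w"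
    using 0 id_le[OF w] by (intro W_dec) auto
  then show ?case by blast
next
  case (Suc j)
  have p1: "subseq (rev [i..<i+j+1]) (rev [i..<i+Suc j+1])"
    using subseq_rev[OF pre_sub[of i "i+j+1"]] by simp
  have p2: "subseq (rev [Suc i..<Suc i+j+1]) (rev [i..<i+Suc j+1])"
    using subseq_rev[OF suf_sub[of i "i+Suc j+1"]] by simp
  show ?case
  proof (cases "bruhat_le n (word_perm (rev [i..<i+Suc j])) w \<and> bruhat_le n (word_perm (rev [i+1..<i+Suc j+1])) w")
    case True
    then have "rev [i..<i+Suc j+1] \<in> W_set n s w"
      using W_dec[of i "Suc j" s n w, OF Suc.prems(1) Suc.prems(2)] by blast
    then show ?thesis by blast
  next
    case False
    then consider "\<not> bruhat_le n (word_perm (rev [i..<i+j+1])) w"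
      | "\<not> bruhat_le n (word_perm (rev [Suc i..<Suc i+j+1])) w"
    proof -
      have X: "[i..<i+Suc j] = [i..<i+j+1]" by simp
      have Y: "[i+1..<i+Suc j+1] = [Suc i..<Suc i+j+1]" by simp
      show "(\<not> bruhat_le n (word_perm (rev [i..<i+j+1])) w \<Longrightarrow> thesis) \<Longrightarrow>
        (\<not> bruhat_le n (word_perm (rev [Suc i..<Suc i+j+1])) w \<Longrightarrow> thesis) \<Longrightarrow> thesis"
        using False unfolding X Y by blast
    qed
    then show ?thesis
    proof cases
      case 1
      have "subseq (rev [i..<i+j+1]) s" using p1 Suc.prems(1) by (rule subseq_order.trans)
      then obtain u where "u \<in> W_set n s w" "subseq u (rev [i..<i+j+1])" using Suc.IH 1 by blast
      then show ?thesis using p1 by (meson subseq_order.trans)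
    next
      case 2
      have "subseq (rev [Suc i..<Suc i+j+1]) s" using p2 Suc.prems(1) by (rule subseq_order.trans)
      then obtain u where "u \<in> W_set n s w" "subseq u (rev [Suc i..<Suc i+j+1])" using Suc.IH 2 by blast
      then show ?thesis using p2 by (meson subseq_order.trans)
    qed
  qed
qed

lemma perm_sub: "set s \<subseteq> {1..<n} \<Longrightarrow> subseq x s \<Longrightarrow> word_perm x permutes {1..n}"
  using subseq_set word_perm_permutes by (meson order_trans)

lemma rk_sub:
  assumes ds: "distinct s" and vs: "set s \<subseteq> {1..<n}" and xs: "subseq x s"
  shows "rk (word_perm x) k l = rk id k l + (if subseq (run k l) x then 1 else 0)"
proof -
  have "0 \<notin> set x" using subseq_set[OF xs] vs by auto
  then show ?thesis using rk_word[OF subseq_distinct[OF ds xs]] by blast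
qed

lemma le_sub_iff:
  assumes ds: "distinct s" and vs: "set s \<subseteq> {1..<n}" and xs: "subseq x s" and ys: "subseq y s"
  shows "bruhat_le n (word_perm x) (word_perm y) \<longleftrightarrow> subseq x y"
proof
  assume "bruhat_le n (word_perm x) (word_perm y)"
  then have H: "rk (word_perm x) k l \<le> rk (word_perm y) k l" for k l by (rule bruhat_imp_rk)
  have "set x \<subseteq> set y"
  proof
    fix c assume c: "c \<in> set x"
    have "subseq (run c (Suc c)) x" using c by (simp add: run_single subseq_singleton_left)
    then have "subseq (run c (Suc c)) y"
      using H[of c "Suc c"] rk_sub[OF ds vs xs, of c "Suc c"] rk_sub[OF ds vs ys, of c "Suc c"]
      by (auto split: if_splits)
    then show "c \<in> set y" by (simp add: run_single subseq_singleton_left)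
  qed
  then show "subseq x y" by (rule subseq_of_set[OF ds xs ys])
next
  assume xy: "subseq x y"
  have "rk (word_perm x) k l \<le> rk (word_perm y) k l" for k l
    using rk_sub[OF ds vs xs, of k l] rk_sub[OF ds vs ys, of k l] xy
    by (auto dest: subseq_order.trans)
  then show "bruhat_le n (word_perm x) (word_perm y)"
    using bruhat_iff_rk[OF perm_sub[OF vs xs] perm_sub[OF vs ys]] by blast
qed

lemma W_notle: "u \<in> W_set n s w \<Longrightarrow> subseq u s \<and> \<not> bruhat_le n (word_perm u) w"
  unfolding W_set_def by auto

lemma le_w_iff:
  assumes ds: "distinct s" and vs: "set s \<subseteq> {1..<n}" and xs: "subseq x s"
    and w: "w permutes {1..n}"
  shows "bruhat_le n (word_perm x) w \<longleftrightarrow> (\<forall>u\<in>W_set n s w. \<not> subseq u x)"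
proof
  assume le: "bruhat_le n (word_perm x) w"
  show "\<forall>u\<in>W_set n s w. \<not> subseq u x"
  proof (intro ballI notI)
    fix u assume u: "u \<in> W_set n s w" and ux: "subseq u x"
    from W_notle[OF u] have us: "subseq u s" and nle: "\<not> bruhat_le n (word_perm u) w" by auto
    have "bruhat_le n (word_perm u) (word_perm x)" using le_sub_iff[OF ds vs us xs] ux by simp
    then have "bruhat_le n (word_perm u) w" using le by (rule ble_trans)
    then show False using nle by simp
  qed
next
  assume noW: "\<forall>u\<in>W_set n s w. \<not> subseq u x"
  show "bruhat_le n (word_perm x) w"
  proof (rule ccontr)
    assume "\<not> bruhat_le n (word_perm x) w"
    then obtain k l where kl: "\<not> rk (word_perm x) k l \<le> rk w k l"
      using bruhat_iff_rk[OF perm_sub[OF vs xs] w] by blast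
    have idw: "rk id k l \<le> rk w k l" by (rule rk_id_le[OF w])
    have Rx: "subseq (run k l) x" and small: "rk w k l < rk id k l + 1"
      using kl idw rk_sub[OF ds vs xs, of k l] by (auto split: if_splits)
    have Rs: "subseq (run k l) s" using Rx xs by (rule subseq_order.trans)
    have rR: "rk (word_perm (run k l)) k l = rk id k l + 1"
      using rk_sub[OF ds vs Rs, of k l] by simp
    have nR: "\<not> bruhat_le n (word_perm (run k l)) w"
    proof
      assume "bruhat_le n (word_perm (run k l)) w"
      then have "rk (word_perm (run k l)) k l \<le> rk w k l" by (rule bruhat_imp_rk)
      then show False using rR small by simp
    qed
    have "\<exists>u\<in>W_set n s w. subseq u (run k l)"
    proof (cases "k < l")
      case True
      have e: "run k l = rev [k..<k + (l - 1 - k) + 1]" using True by (simp add: run_def)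
      show ?thesis using min_dec[OF w, of k "l - 1 - k"] Rs nR unfolding e by blast
    next
      case False
      have e: "run k l = [l - 1..<(l - 1) + (k - (l - 1)) + 1]" using False by (simp add: run_def)
      show ?thesis using min_inc[OF w, of "l - 1" "k - (l - 1)"] Rs nR unfolding e by blast
    qed
    then obtain u where "u \<in> W_set n s w" "subseq u (run k l)" by blast
    moreover from this(2) have "subseq u x" using Rx by (rule subseq_order.trans)
    ultimately show False using noW by blast
  qed
qed

theorem proposition3p7:
  fixes n :: nat and v w :: "nat \<Rightarrow> nat" and s :: "nat list"
  assumes "v permutes {1..n}" and "w permutes {1..n}"
    and "boolean_perm n v"
    and "reduced_word n s v"
  shows "word_perm ` W_up n s w
           = maximal_elems n (bruhat_interval n v \<inter> bruhat_interval n w)"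
proof -
  note w = assms(2)
  have vs: "set s \<subseteq> {1..<n}" and v: "v = word_perm s"
    using assms(4) by (auto simp: reduced_word_def valid_word_def)
  have ds: "distinct s" using assms(3,4) by (simp add: boolean_perm_def)
  define A where "A = {u. subseq u s \<and> (\<forall>x \<in> W_set n s w. \<not> subseq x u)}"
  have Wup: "W_up n s w = {u \<in> A. \<forall>u' \<in> A. subseq u u' \<longrightarrow> u' = u}"
    unfolding W_up_def A_def Let_def by simp
  have Bv: "bruhat_le n q v \<longleftrightarrow> (\<exists>x. subseq x s \<and> q = word_perm x)" for q
  proof
    assume "bruhat_le n q v"
    then have "(q, v) \<in> (bruhat_step n)\<^sup>*" by (simp add: bruhat_le_def)
    then show "\<exists>x. subseq x s \<and> q = word_perm x" using below_word[of q v n s s] v by simp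
  next
    assume "\<exists>x. subseq x s \<and> q = word_perm x"
    then obtain x where "subseq x s" "q = word_perm x" by blast
    then show "bruhat_le n q v" using le_sub_iff[OF ds vs _ subseq_order.refl] v by simp
  qed
  have Aw: "x \<in> A \<longleftrightarrow> subseq x s \<and> bruhat_le n (word_perm x) w" for x
    unfolding A_def using le_w_iff[OF ds vs _ w] by blast
  show ?thesis
  proof (rule equalityI; rule subsetI)
    fix p assume "p \<in> word_perm ` W_up n s w"
    then obtain u where u: "u \<in> A" and umax: "\<forall>u' \<in> A. subseq u u' \<longrightarrow> u' = u" and p: "p = word_perm u"
      unfolding Wup by blast
    have us: "subseq u s" and uw: "bruhat_le n p w" using u Aw p by auto
    have uv: "bruhat_le n p v" using Bv us p by blast
    have "\<forall>u' \<in> bruhat_interval n v \<inter> bruhat_interval n w. bruhat_le n p u' \<longrightarrow> u' = p"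
    proof (intro ballI impI)
      fix u' assume u': "u' \<in> bruhat_interval n v \<inter> bruhat_interval n w" and pu': "bruhat_le n p u'"
      then obtain y where ys: "subseq y s" and y: "u' = word_perm y"
        using Bv by (auto simp: bruhat_interval_def)
      have "y \<in> A" using Aw ys y u' by (auto simp: bruhat_interval_def)
      moreover have "subseq u y" using le_sub_iff[OF ds vs us ys] pu' p y by simp
      ultimately have "y = u" using umax by blast
      then show "u' = p" using y p by simp
    qed
    then show "p \<in> maximal_elems n (bruhat_interval n v \<inter> bruhat_interval n w)"
      using uv uw by (simp add: maximal_elems_def bruhat_interval_def)
  next
    fix p assume "p \<in> maximal_elems n (bruhat_interval n v \<inter> bruhat_interval n w)"
    then have pv: "bruhat_le n p v" and pw: "bruhat_le n p w"
      and pmax: "\<And>u'. bruhat_le n u' v \<Longrightarrow> bruhat_le n u' w \<Longrightarrow> bruhat_le n p u' \<Longrightarrow> u' = p"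
      by (auto simp: maximal_elems_def bruhat_interval_def)
    obtain x where xs: "subseq x s" and px: "p = word_perm x" using Bv pv by blast
    have xA: "x \<in> A" using Aw xs pw px by simp
    define P where "P = (\<lambda>y. y \<in> A \<and> subseq x y)"
    have Px: "P x" using xA by (simp add: P_def)
    have bound: "\<forall>y. P y \<longrightarrow> length y < Suc (length s)"
      by (auto simp: P_def A_def dest: list_emb_length)
    obtain u where Pu: "P u" and ugr: "\<forall>y. P y \<longrightarrow> length y \<le> length u"
      using ex_has_greatest_nat[OF Px bound] by blast
    have uA: "u \<in> A" and xu: "subseq x u" using Pu by (auto simp: P_def)
    have umax: "\<forall>u' \<in> A. subseq u u' \<longrightarrow> u' = u"
    proof (intro ballI impI)
      fix u' assume u'A: "u' \<in> A" and uu': "subseq u u'"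
      have "P u'" using u'A xu uu' by (auto simp: P_def dest: subseq_order.trans)
      then have "length u' \<le> length u" using ugr by blast
      moreover have "length u \<le> length u'" using uu' by (rule list_emb_length)
      ultimately show "u' = u" using subseq_same_length[OF uu'] by simp
    qed
    have uW: "u \<in> W_up n s w" using uA umax unfolding Wup by blast
    have us: "subseq u s" and uw: "bruhat_le n (word_perm u) w" using uA Aw by auto
    have uv: "bruhat_le n (word_perm u) v" using Bv us by blast
    have "bruhat_le n p (word_perm u)" using le_sub_iff[OF ds vs xs us] xu px by simp
    then have "word_perm u = p" using pmax uv uw by blast
    then show "p \<in> word_perm ` W_up n s w" using uW by blast
  qed
qed

end
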